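(* Let $t\ge 3$, let $\mathcal{A}$ be a nontrivial clutter on $E_t=\{1,\ldots,t\}$, and let $\mathcal{B}:=\mathfrak{B}(\mathcal{A})$ be its blocker. Then $T_{\mathcal{B}^{\triangledown}}=-T_{\mathcal{A}^{\triangledown}}\cdot\overline{\mathbf{U}}(2^t)$, and: (i) $\mathfrak{q}(T_{\mathcal{B}^{\triangledown}})=\mathfrak{q}(T_{\mathcal{A}^{\triangledown}})$ and $\boldsymbol{x}(T_{\mathcal{B}^{\triangledown}})=\boldsymbol{x}(T_{\mathcal{A}^{\triangledown}})\cdot\overline{\mathbf{U}}(2^t)\cdot\overline{\mathbf{T}}(2^t)$; (ii) if the set $\{k\in\{1,\ldots,2^t\}: T_{\mathcal{A}^{\triangledown}}(k)=-1\}$ is the disjoint union of integer intervals $[i_1,j_1]\,\dot\cup\cdots\dot\cup\,[i_\varrho,j_\varrho]$ with $i_k\le j_k$ and $j_k+2\le i_{k+1}$ for $1\le k\le \varrho-1$, then $\mathfrak{q}(T_{\mathcal{B}^{\triangledown}})=\mathfrak{q}(T_{\mathcal{A}^{\triangledown}})=2\varrho-1$, $\boldsymbol{x}(T_{\mathcal{A}^{\triangledown}})=\sum_{k=1}^{\varrho-1}\boldsymbol{\sigma}(j_k+1)-\sum_{\ell=1}^{\varrho}\boldsymbol{\sigma}(i_\ell)$, and $\boldsymbol{x}(T_{\mathcal{B}^{\triangledown}})=\sum_{k=1}^{\varrho-1}\boldsymbol{\sigma}(2^t-j_k+1)-\sum_{\ell=1}^{\varrho}\boldsymbol{\sigma}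(2^t-i_\ell+2)$.
   Context: A clutter on $E_t$ is a family of subsets of $E_t$ none of which contains another; it is nontrivial if it is neither the empty family nor $\{\emptyset\}$. For a family $\mathcal{C}$, $\mathcal{C}^{\triangledown}:=\{D\subseteq E_t: D\supseteq C\text{ for some }C\in\mathcal{C}\}$. The blocker $\mathfrak{B}(\mathcal{A})$ is the family of inclusion-minimal sets meeting every member of $\mathcal{A}$. Order the $2^t$ subsets of $E_t$ by increasing cardinality, and lexicographically among subsets of equal cardinality. For a family $\mathcal{F}$ of subsets of $E_t$, $\boldsymbol{\gamma}(\mathcal{F})\in\{0,1\}^{2^t}$ has $k$-th entry $1$ iff the $k$-th subset in this order lies in $\mathcal{F}$, and the characteristic tope is $T_{\mathcal{F}}:=\mathrm{T}^{(+)}_{2^t}-2\boldsymbol{\gamma}(\mathcal{F})\in\{1,-1\}^{2^t}$, where $\mathrm{T}^{(+)}_{2^t}$ is the all-ones row vector. Let $\boldsymbol{\sigma}(e)$ be the $e$-th standard unit vector of $\mathbb{R}^{2^t}$. Define $R^0:=\mathrm{T}^{(+)}_{2^t}$ and, for $1\le s\le 2^t-1$, $R^s$ the vector with entries $-1$ in positions $1,\ldots,s$ and $1$ elsewhere (first half of a symmetric cycle $R^0,\ldots,R^{2\cdot2^t-1}$, $R^{2^t+k}=-R^k$, in the hypercube graph on $\{1,-1\}^{2^t}$). For $T\in\{1,-1\}^{2^t}$, $\boldsymbol{x}(T)$ is the unique vector (in $\{-1,0,1\}^{2^t}$) with $T=\sum_{i=1}^{2^t}x_iR^{i-1}$, and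 $\mathfrak{q}(T)$ is the number of its nonzero entries. $\overline{\mathbf{U}}(2^t)$ is the backward identity matrix ($(i,j)$ entry $\delta_{i+j,2^t+1}$) and $\overline{\mathbf{T}}(2^t)$ the forward shift matrix ($(i,j)$ entry $\delta_{j-i,1}$), both of order $2^t$. *)

theory Defs
  imports Main "HOL-Library.Function_Algebras"
begin

(* Vectors in R^(2^t) are represented as functions nat => int, indexed 1..N
   (as in the paper), and equal to 0 outside {1..N}. Matrices: nat => nat => int. *)

definition clutter :: "nat \<Rightarrow> nat set set \<Rightarrow> bool" where
  "clutter t \<A> \<longleftrightarrow> (\<forall>A\<in>\<A>. A \<subseteq> {1..t}) \<and>
     (\<forall>A\<in>\<A>. \<forall>A'\<in>\<A>. A \<subseteq> A' \<longrightarrow> A = A')"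

definition nontrivial_clutter :: "nat \<Rightarrow> nat set set \<Rightarrow> bool" where
  "nontrivial_clutter t \<A> \<longleftrightarrow> clutter t \<A> \<and> \<A> \<noteq> {} \<and> \<A> \<noteq> {{}}"

definition upcl :: "nat \<Rightarrow> nat set set \<Rightarrow> nat set set" where
  "upcl t \<C> = {D. D \<subseteq> {1..t} \<and> (\<exists>C\<in>\<C>. C \<subseteq> D)}"

definition meets_all :: "nat set set \<Rightarrow> nat set \<Rightarrow> bool" where
  "meets_all \<A> B \<longleftrightarrow> (\<forall>A\<in>\<A>. B \<inter> A \<noteq> {})"

definition blocker :: "nat \<Rightarrow> nat set set \<Rightarrow> nat set set" where
  "blocker t \<A> = {B. B \<subseteq> {1..t} \<and> meets_all \<A> B \<and> (\<forall>B'. B' \<subset> B \<longrightarrow> \<not> meets_all \<A> B')}"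

definition subset_less :: "nat set \<Rightarrow> nat set \<Rightarrow> bool" where
  "subset_less S T \<longleftrightarrow> card S < card T \<or>
     (card S = card T \<and> (sorted_list_of_set S, sorted_list_of_set T) \<in> lexord {(a, b). a < (b::nat)})"

definition subset_pos :: "nat \<Rightarrow> nat set \<Rightarrow> nat" where
  "subset_pos t S = card {S'. S' \<subseteq> {1..t} \<and> subset_less S' S} + 1"

definition nth_subset :: "nat \<Rightarrow> nat \<Rightarrow> nat set" where
  "nth_subset t k = (THE S. S \<subseteq> {1..t} \<and> subset_pos t S = k)"

definition tope :: "nat \<Rightarrow> nat set set \<Rightarrow> nat \<Rightarrow> int" where
  "tope t \<F> = (\<lambda>k. if k \<in> {1..2^t} then (if nth_subset t k \<in> \<F> then -1 else 1) else 0)"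

definition Rvec :: "nat \<Rightarrow> nat \<Rightarrow> nat \<Rightarrow> int" where
  "Rvec N s = (\<lambda>k. if k \<in> {1..N} then (if k \<le> s then -1 else 1) else 0)"

definition xvec :: "nat \<Rightarrow> (nat \<Rightarrow> int) \<Rightarrow> nat \<Rightarrow> int" where
  "xvec N T = (THE x. (\<forall>k. x k \<in> {-1, 0, 1}) \<and> (\<forall>k. k \<notin> {1..N} \<longrightarrow> x k = 0) \<and>
      T = (\<lambda>k. \<Sum>i=1..N. x i * Rvec N (i - 1) k))"

definition qnum :: "nat \<Rightarrow> (nat \<Rightarrow> int) \<Rightarrow> nat" where
  "qnum N T = card {i \<in> {1..N}. xvec N T i \<noteq> 0}"

definition sigma :: "nat \<Rightarrow> nat \<Rightarrow> int" where
  "sigma e = (\<lambda>k. if k = e then 1 else 0)"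

definition Ubar :: "nat \<Rightarrow> nat \<Rightarrow> nat \<Rightarrow> int" where
  "Ubar N = (\<lambda>i j. if i + j = N + 1 then 1 else 0)"

definition Tbar :: "nat \<Rightarrow> nat \<Rightarrow> nat \<Rightarrow> int" where
  "Tbar N = (\<lambda>i j. if j = i + 1 then 1 else 0)"

definition vecmat :: "nat \<Rightarrow> (nat \<Rightarrow> int) \<Rightarrow> (nat \<Rightarrow> nat \<Rightarrow> int) \<Rightarrow> nat \<Rightarrow> int" where
  "vecmat N v M = (\<lambda>j. if j \<in> {1..N} then (\<Sum>i=1..N. v i * M i j) else 0)"

end

theory Submission
  imports Defs
begin


lemma sum_fun_apply: "(sum f A) x = (\<Sum>a\<in>A. f a x)" for f :: "'b \<Rightarrow> 'c \<Rightarrow> 'd::comm_monoid_add"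
  by (induction A rule: infinite_finite_induct) auto

lemma sl_Min_char:
  fixes S T :: "nat set"
  assumes "finite S" "finite T" "card S = card T" "S \<noteq> T"
  shows "(sorted_list_of_set S, sorted_list_of_set T) \<in> lexord {(a,b). a < b}
     \<longleftrightarrow> Min ((S - T) \<union> (T - S)) \<in> S"
  using assms
proof (induction "card S" arbitrary: S T)
  case 0
  then show ?case by auto
next
  case (Suc n)
  have ne: "S \<noteq> {}" "T \<noteq> {}" using Suc.hyps Suc.prems by auto
  define a where "a = Min S"
  define b where "b = Min T"
  have aS: "a \<in> S" "\<And>y. y \<in> S \<Longrightarrow> a \<le> y" using ne Suc.prems a_def by auto
  have bT: "b \<in> T" "\<And>y. y \<in> T \<Longrightarrow> b \<le> y" using ne Suc.prems b_def by auto
  have fin: "finite ((S - T) \<union> (T - S))" using Suc.prems by auto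
  have eqS: "sorted_list_of_set S = a # sorted_list_of_set (S - {a})"
    using sorted_list_of_set_nonempty[OF Suc.prems(1) ne(1)] a_def by simp
  have eqT: "sorted_list_of_set T = b # sorted_list_of_set (T - {b})"
    using sorted_list_of_set_nonempty[OF Suc.prems(2) ne(2)] b_def by simp
  consider "a < b" | "b < a" | "a = b" by linarith
  then show ?case
  proof cases
    case 1
    have "Min ((S - T) \<union> (T - S)) = a"
      apply (rule Min_eqI[OF fin])
      using aS bT 1 by force+
    then show ?thesis using eqS eqT 1 aS by simp
  next
    case 2
    have "Min ((S - T) \<union> (T - S)) = b"
      apply (rule Min_eqI[OF fin])
      using aS bT 2 by force+
    moreover have "b \<notin> S" using aS 2 by force
    ultimately show ?thesis using eqS eqT 2 by simp
  next
    case 3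
    have c1: "n = card (S - {a})" using Suc.hyps aS Suc.prems by simp
    have c2: "card (S - {a}) = card (T - {a})" using Suc.prems aS bT 3 by simp
    have ne2: "S - {a} \<noteq> T - {a}" using Suc.prems aS bT 3 by blast
    have "((S - {a}) - (T - {a})) \<union> ((T - {a}) - (S - {a})) = (S - T) \<union> (T - S)"
      using aS bT 3 by blast
    moreover have "Min ((S - T) \<union> (T - S)) \<noteq> a"
    proof
      assume "Min ((S - T) \<union> (T - S)) = a"
      moreover have "Min ((S - T) \<union> (T - S)) \<in> (S - T) \<union> (T - S)"
        using fin ne2 by (intro Min_in) auto
      ultimately show False using aS bT 3 by auto
    qed
    ultimately show ?thesis
      using Suc.hyps(1)[OF c1 _ _ c2 ne2] Suc.prems eqS eqT 3 by auto
  qed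
qed

lemma sless_irrefl: "\<not> subset_less S S"
  unfolding subset_less_def by (auto simp: lexord_irreflexive)

lemma sless_trans:
  assumes a: "subset_less S T" "subset_less T U"
  shows "subset_less S U"
proof -
  have tr: "trans {(a, b). a < (b::nat)}" by (auto simp: trans_def)
  show ?thesis
  proof (cases "card S < card T \<or> card T < card U")
    case True
    then show ?thesis using a unfolding subset_less_def by auto
  next
    case False
    then have "card S = card T" "card T = card U"
      "(sorted_list_of_set S, sorted_list_of_set T) \<in> lexord {(a, b). a < (b::nat)}"
      "(sorted_list_of_set T, sorted_list_of_set U) \<in> lexord {(a, b). a < (b::nat)}"
      using a unfolding subset_less_def by auto
    then show ?thesis unfolding subset_less_def using lexord_trans[OF _ _ tr] by simp
  qed
qed

lemma sless_total:
  assumes "finite S" "finite T" "S \<noteq> T"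
  shows "subset_less S T \<or> subset_less T S"
proof (cases "card S = card T")
  case True
  have "(S - T) \<union> (T - S) \<noteq> {}" using assms by blast
  then have Mi: "Min ((S - T) \<union> (T - S)) \<in> (S - T) \<union> (T - S)" using assms by (intro Min_in) auto
  moreover have e: "(T - S) \<union> (S - T) = (S - T) \<union> (T - S)" by blast
  moreover have "T \<noteq> S" using assms by blast
  ultimately have "(sorted_list_of_set S, sorted_list_of_set T) \<in> lexord {(a,b). a < b} \<or>
     (sorted_list_of_set T, sorted_list_of_set S) \<in> lexord {(a,b). a < (b::nat)}"
    using sl_Min_char[OF assms(1,2) True assms(3)] sl_Min_char[OF assms(2,1) True[symmetric]]
  proof -
    let ?M = "Min ((S - T) \<union> (T - S))"
    have "?M \<in> S \<or> ?M \<in> T" using Mi by blast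
    then show ?thesis
    proof
      assume "?M \<in> S" then show ?thesis using sl_Min_char[OF assms(1,2) True assms(3)] by simp
    next
      assume "?M \<in> T" then show ?thesis using sl_Min_char[OF assms(2,1) True[symmetric] \<open>T \<noteq> S\<close>] e by simp
    qed
  qed
  then show ?thesis
    unfolding subset_less_def using True by simp
next
  case False
  then show ?thesis unfolding subset_less_def by auto
qed

lemma sless_compl:
  assumes "S \<subseteq> {1..t}" "T \<subseteq> {1..t}"
  shows "subset_less ({1..t} - T) ({1..t} - S) \<longleftrightarrow> subset_less S T"
proof -
  have fS: "finite S" and fT: "finite T" using assms finite_subset by blast+
  have cS: "card ({1..t} - S) = t - card S" using assms by (simp add: card_Diff_subset fS)
  have cT: "card ({1..t} - T) = t - card T" using assms by (simp add: card_Diff_subset fT)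
  have leS: "card S \<le> t" and leT: "card T \<le> t"
    using assms card_mono[of "{1..t}"] by fastforce+
  show ?thesis
  proof (cases "card S = card T")
    case False
    then show ?thesis unfolding subset_less_def cS cT using leS leT by auto
  next
    case True
    show ?thesis
    proof (cases "S = T")
      case True
      then show ?thesis using sless_irrefl by auto
    next
      case False
      have ne: "{1..t} - T \<noteq> {1..t} - S" using False assms by blast
      have ceq: "card ({1..t} - T) = card ({1..t} - S)" using cS cT True by simp
      have sd: "(({1..t} - T) - ({1..t} - S)) \<union> (({1..t} - S) - ({1..t} - T)) = (S - T) \<union> (T - S)"
        using assms by blast
      have "(S - T) \<union> (T - S) \<noteq> {}" using False by blast
      then have "Min ((S - T) \<union> (T - S)) \<in> (S - T) \<union> (T - S)" using fS fT by (intro Min_in) auto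
      then have "Min ((S - T) \<union> (T - S)) \<in> {1..t} - T \<longleftrightarrow> Min ((S - T) \<union> (T - S)) \<in> S"
        using assms by blast
      then have m: "Min ((({1..t} - T) - ({1..t} - S)) \<union> (({1..t} - S) - ({1..t} - T))) \<in> {1..t} - T
          \<longleftrightarrow> Min ((S - T) \<union> (T - S)) \<in> S" using sd by simp
      have l1: "subset_less ({1..t} - T) ({1..t} - S) \<longleftrightarrow>
          (sorted_list_of_set ({1..t} - T), sorted_list_of_set ({1..t} - S)) \<in> lexord {(a,b). a < (b::nat)}"
        unfolding subset_less_def using ceq by simp
      have l2: "subset_less S T \<longleftrightarrow>
          (sorted_list_of_set S, sorted_list_of_set T) \<in> lexord {(a,b). a < (b::nat)}"
        unfolding subset_less_def using True by simp
      have l3: "(sorted_list_of_set ({1..t} - T), sorted_list_of_set ({1..t} - S)) \<in> lexord {(a,b). a < (b::nat)}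
         \<longleftrightarrow> Min ((({1..t} - T) - ({1..t} - S)) \<union> (({1..t} - S) - ({1..t} - T))) \<in> {1..t} - T"
        by (rule sl_Min_char) (use ceq ne in auto)
      show ?thesis
        using l1 l2 l3 m sl_Min_char[OF fS fT True False] by blast
    qed
  qed
qed


definition rk :: "nat \<Rightarrow> nat set \<Rightarrow> nat" where
  "rk t S = card {S'. S' \<subseteq> {1..t} \<and> subset_less S' S}"

lemma pos_rk: "subset_pos t S = rk t S + 1"
  unfolding subset_pos_def rk_def by simp

lemma card_PowE: "card (Pow {1..t}) = 2 ^ t"
  by (simp add: card_Pow)

lemma rk_set_sub: "{S'. S' \<subseteq> {1..t} \<and> subset_less S' S} \<subseteq> Pow {1..t}" by auto

lemma rk_lt:
  assumes "S \<subseteq> {1..t}" "subset_less S T"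
  shows "rk t S < rk t T"
proof -
  have sub: "{S'. S' \<subseteq> {1..t} \<and> subset_less S' S} \<subseteq> {S'. S' \<subseteq> {1..t} \<and> subset_less S' T}"
  proof
    fix X assume "X \<in> {S'. S' \<subseteq> {1..t} \<and> subset_less S' S}"
    then show "X \<in> {S'. S' \<subseteq> {1..t} \<and> subset_less S' T}" using sless_trans[OF _ assms(2)] by simp
  qed
  have "S \<in> {S'. S' \<subseteq> {1..t} \<and> subset_less S' T}" using assms by simp
  moreover have "S \<notin> {S'. S' \<subseteq> {1..t} \<and> subset_less S' S}" using sless_irrefl by simp
  ultimately have "{S'. S' \<subseteq> {1..t} \<and> subset_less S' S} \<subset> {S'. S' \<subseteq> {1..t} \<and> subset_less S' T}"
    using sub by blast
  moreover have "finite {S'. S' \<subseteq> {1..t} \<and> subset_less S' T}"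
    by (rule finite_subset[OF rk_set_sub]) simp
  ultimately show ?thesis unfolding rk_def by (rule psubset_card_mono[rotated])
qed

lemma rk_bound:
  assumes "S \<subseteq> {1..t}"
  shows "rk t S < 2 ^ t"
proof -
  have "{S'. S' \<subseteq> {1..t} \<and> subset_less S' S} \<subseteq> Pow {1..t} - {S}"
    using sless_irrefl by auto
  then have "rk t S \<le> card (Pow {1..t} - {S})" unfolding rk_def
    by (intro card_mono) auto
  also have "\<dots> = 2 ^ t - 1" using assms card_PowE by simp
  finally have "rk t S \<le> 2 ^ t - 1" .
  moreover have "(0::nat) < 2 ^ t" by simp
  ultimately show ?thesis by linarith
qed

lemma rk_inj: "inj_on (rk t) (Pow {1..t})"
proof (rule inj_onI)
  fix S T assume a: "S \<in> Pow {1..t}" "T \<in> Pow {1..t}" "rk t S = rk t T"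
  show "S = T"
  proof (rule ccontr)
    assume "S \<noteq> T"
    moreover have "finite S" "finite T" using a finite_subset by auto
    ultimately have "subset_less S T \<or> subset_less T S" using sless_total by blast
    then show False using rk_lt[of S t T] rk_lt[of T t S] a by auto
  qed
qed

lemma rk_image: "rk t ` Pow {1..t} = {..<2 ^ t}"
proof -
  have "rk t ` Pow {1..t} \<subseteq> {..<2 ^ t}" using rk_bound by auto
  moreover have "card (rk t ` Pow {1..t}) = card {..<(2::nat) ^ t}"
    using card_image[OF rk_inj] card_PowE by simp
  ultimately show ?thesis by (intro card_subset_eq) auto
qed

lemma nth_subset_eq:
  assumes "S \<subseteq> {1..t}" "subset_pos t S = k"
  shows "nth_subset t k = S"
  unfolding nth_subset_def
proof (rule the_equality)
  show "S \<subseteq> {1..t} \<and> subset_pos t S = k" using assms by simp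
  fix S' assume "S' \<subseteq> {1..t} \<and> subset_pos t S' = k"
  then show "S' = S" using assms rk_inj[of t] unfolding pos_rk inj_on_def by auto
qed

lemma nth_subset_props:
  assumes "k \<in> {1..2^t}"
  shows "nth_subset t k \<subseteq> {1..t} \<and> subset_pos t (nth_subset t k) = k"
proof -
  have "k - 1 \<in> rk t ` Pow {1..t}" using assms rk_image by auto
  then obtain S where S: "S \<subseteq> {1..t}" "rk t S = k - 1" by auto
  then have "subset_pos t S = k" using assms pos_rk by simp
  then show ?thesis using nth_subset_eq S by simp
qed

lemma rk_compl:
  assumes "S \<subseteq> {1..t}"
  shows "rk t ({1..t} - S) = 2 ^ t - 1 - rk t S"
proof -
  let ?E = "{1..t}"
  have "{S'. S' \<subseteq> ?E \<and> subset_less S' (?E - S)} = (\<lambda>X. ?E - X) ` {X. X \<subseteq> ?E \<and> subset_less S X}"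
  proof (intro set_eqI iffI)
    fix S' assume a: "S' \<in> {S'. S' \<subseteq> ?E \<and> subset_less S' (?E - S)}"
    then have "subset_less S (?E - S')" using sless_compl[of S' t "?E - S"] assms
      by (simp add: double_diff)
    then show "S' \<in> (\<lambda>X. ?E - X) ` {X. X \<subseteq> ?E \<and> subset_less S X}"
      using a by (intro image_eqI[of _ _ "?E - S'"]) auto
  next
    fix S' assume "S' \<in> (\<lambda>X. ?E - X) ` {X. X \<subseteq> ?E \<and> subset_less S X}"
    then obtain X where X: "X \<subseteq> ?E" "subset_less S X" "S' = ?E - X" by auto
    then show "S' \<in> {S'. S' \<subseteq> ?E \<and> subset_less S' (?E - S)}"
      using sless_compl[of S t X] assms by auto
  qed
  moreover have "inj_on (\<lambda>X. ?E - X) {X. X \<subseteq> ?E \<and> subset_less S X}"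
    by (rule inj_onI) auto
  moreover have "{X. X \<subseteq> ?E \<and> subset_less S X} = (Pow ?E - {S}) - {S'. S' \<subseteq> ?E \<and> subset_less S' S}"
  proof (intro set_eqI iffI)
    fix X assume "X \<in> {X. X \<subseteq> ?E \<and> subset_less S X}"
    then show "X \<in> (Pow ?E - {S}) - {S'. S' \<subseteq> ?E \<and> subset_less S' S}"
      using sless_irrefl sless_trans by blast
  next
    fix X assume a: "X \<in> (Pow ?E - {S}) - {S'. S' \<subseteq> ?E \<and> subset_less S' S}"
    then have "finite X" "finite S" "X \<noteq> S" using assms finite_subset by auto
    then show "X \<in> {X. X \<subseteq> ?E \<and> subset_less S X}" using a sless_total[of S X] by auto
  qed
  moreover have "card ((Pow ?E - {S}) - {S'. S' \<subseteq> ?E \<and> subset_less S' S}) = 2 ^ t - 1 - rk t S"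
    unfolding rk_def using assms card_PowE sless_irrefl
    by (subst card_Diff_subset) auto
  ultimately show ?thesis unfolding rk_def by (simp add: card_image)
qed

lemma nth_subset_compl:
  assumes "k \<in> {1..2^t}"
  shows "nth_subset t (2^t + 1 - k) = {1..t} - nth_subset t k"
proof -
  let ?S = "nth_subset t k"
  have S: "?S \<subseteq> {1..t}" "rk t ?S = k - 1" using nth_subset_props[OF assms] pos_rk by auto
  have "subset_pos t ({1..t} - ?S) = 2^t + 1 - k"
    using rk_compl[OF S(1)] S(2) assms pos_rk by (simp add: Suc_diff_le)
  then show ?thesis by (intro nth_subset_eq) auto
qed

lemma nth_subset_1: "nth_subset t 1 = {}"
proof (rule nth_subset_eq)
  have "{S'. S' \<subseteq> {1..t} \<and> subset_less S' {}} = {}"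
    unfolding subset_less_def
    by (auto simp: lexord_irreflexive)
  then show "subset_pos t {} = 1" unfolding pos_rk rk_def by simp
qed auto

lemma nth_subset_N: "nth_subset t (2^t) = {1..t}"
  using nth_subset_compl[of 1 t] nth_subset_1 by simp




lemma meets_mono: "meets_all \<A> B \<Longrightarrow> B \<subseteq> D \<Longrightarrow> meets_all \<A> D"
  unfolding meets_all_def by blast

lemma upcl_blocker:
  assumes "D \<subseteq> {1..t}"
  shows "D \<in> upcl t (blocker t \<A>) \<longleftrightarrow> meets_all \<A> D"
proof
  assume "D \<in> upcl t (blocker t \<A>)"
  then obtain B where "B \<in> blocker t \<A>" "B \<subseteq> D" unfolding upcl_def by auto
  moreover then have "meets_all \<A> B" unfolding blocker_def by simp
  ultimately show "meets_all \<A> D" using meets_mono by blast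
next
  assume m: "meets_all \<A> D"
  have "\<exists>B. (B \<subseteq> D \<and> meets_all \<A> B) \<and> (\<forall>y. y \<subseteq> D \<and> meets_all \<A> y \<longrightarrow> card B \<le> card y)"
    by (rule ex_has_least_nat[of "\<lambda>B. B \<subseteq> D \<and> meets_all \<A> B" D card]) (use m in simp)
  then obtain B where B1: "B \<subseteq> D" "meets_all \<A> B" and B2: "\<And>y. y \<subseteq> D \<Longrightarrow> meets_all \<A> y \<Longrightarrow> card B \<le> card y"
    by blast
  have fD: "finite D" using assms finite_subset by blast
  have "B \<in> blocker t \<A>"
    unfolding blocker_def
  proof (intro CollectI conjI allI impI)
    show "B \<subseteq> {1..t}" using B1 assms by blast
    show "meets_all \<A> B" using B1 by blast
    fix B' assume "B' \<subset> B"
    moreover have "finite B" using B1 fD finite_subset by blast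
    ultimately have "card B' < card B" by (rule psubset_card_mono[rotated])
    moreover have "B' \<subseteq> D" using \<open>B' \<subset> B\<close> B1 by blast
    ultimately show "\<not> meets_all \<A> B'" using B2[of B'] by linarith
  qed
  then show "D \<in> upcl t (blocker t \<A>)" unfolding upcl_def using assms B1 by blast
qed

definition Pr :: "nat \<Rightarrow> (nat \<Rightarrow> int) \<Rightarrow> nat \<Rightarrow> int" where
  "Pr N x k = (\<Sum>i=1..N. x i * Rvec N (i - 1) k)"

lemma Pr_diff:
  assumes "1 \<le> k" "k + 1 \<le> N"
  shows "Pr N x (k + 1) - Pr N x k = 2 * x (k + 1)"
proof -
  have "Pr N x (k + 1) - Pr N x k = (\<Sum>i=1..N. x i * (Rvec N (i - 1) (k+1) - Rvec N (i - 1) k))"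
    unfolding Pr_def by (simp add: sum_subtractf algebra_simps)
  also have "\<dots> = (\<Sum>i=1..N. if i = k + 1 then 2 * x i else 0)"
    by (rule sum.cong) (use assms in \<open>auto simp: Rvec_def\<close>)
  also have "\<dots> = 2 * x (k + 1)" using assms by (simp add: sum.delta)
  finally show ?thesis .
qed

lemma Pr_ends:
  assumes "1 \<le> N"
  shows "Pr N x 1 + Pr N x N = 2 * x 1"
proof -
  have "Pr N x 1 + Pr N x N = (\<Sum>i=1..N. x i * (Rvec N (i - 1) 1 + Rvec N (i - 1) N))"
    unfolding Pr_def by (simp add: sum.distrib algebra_simps)
  also have "\<dots> = (\<Sum>i=1..N. if i = 1 then 2 * x i else 0)"
    by (rule sum.cong) (use assms in \<open>auto simp: Rvec_def\<close>)
  also have "\<dots> = 2 * x 1" using assms by (simp add: sum.delta)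
  finally show ?thesis .
qed

lemma Pr_out: "k \<notin> {1..N} \<Longrightarrow> Pr N x k = 0"
  unfolding Pr_def Rvec_def by (cases "1 \<le> k") auto

lemma xvec_char:
  assumes N: "1 \<le> N" and T1: "\<forall>k\<in>{1..N}. T k = 1 \<or> T k = -1" and T0: "\<forall>k. k \<notin> {1..N} \<longrightarrow> T k = 0"
  shows "xvec N T = (\<lambda>k. if k = 1 then (T 1 + T N) div 2
                        else if 2 \<le> k \<and> k \<le> N then (T k - T (k - 1)) div 2 else 0)"
    (is "_ = ?X")
proof -
  have eqPr: "(\<lambda>k. \<Sum>i=1..N. x i * Rvec N (i - 1) k) = Pr N x" for x
    unfolding Pr_def by simp
  have uniq: "x = ?X" if hx: "\<forall>k. k \<notin> {1..N} \<longrightarrow> x k = 0" "T = Pr N x" for x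
  proof
    fix k
    show "x k = ?X k"
    proof (cases "k = 1")
      case True
      then show ?thesis using Pr_ends[OF N, of x] hx by simp
    next
      case False
      show ?thesis
      proof (cases "2 \<le> k \<and> k \<le> N")
        case True
        then have "Pr N x (k - 1 + 1) - Pr N x (k - 1) = 2 * x (k - 1 + 1)"
          by (intro Pr_diff) auto
        then show ?thesis using True False hx by simp
      next
        case False
        then show ?thesis using \<open>k \<noteq> 1\<close> hx by auto
      qed
    qed
  qed
  have exist: "(\<forall>k. ?X k \<in> {-1, 0, 1}) \<and> (\<forall>k. k \<notin> {1..N} \<longrightarrow> ?X k = 0) \<and> T = Pr N ?X"
  proof (intro conjI allI impI)
    fix k
    show "?X k \<in> {-1, 0, 1}"
    proof -
      have "T 1 = 1 \<or> T 1 = -1" "T N = 1 \<or> T N = -1" using T1 N by auto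
      moreover have "2 \<le> k \<Longrightarrow> k \<le> N \<Longrightarrow> (T k = 1 \<or> T k = -1) \<and> (T (k-1) = 1 \<or> T (k-1) = -1)"
      proof -
        assume "2 \<le> k" "k \<le> N"
        then have "k - 1 \<in> {1..N}" "k \<in> {1..N}" by auto
        then show ?thesis using T1 by blast
      qed
      ultimately show ?thesis by auto
    qed
    show "k \<notin> {1..N} \<Longrightarrow> ?X k = 0" using N by auto
  next
    define D where "D k = Pr N ?X k - T k" for k
    have two: "2 * ?X k = T k - T (k - 1)" if "2 \<le> k" "k \<le> N" for k
    proof -
      have "k - 1 \<in> {1..N}" "k \<in> {1..N}" using that by auto
      then have "(T k = 1 \<or> T k = -1) \<and> (T (k-1) = 1 \<or> T (k-1) = -1)" using T1 by blast
      then show ?thesis using that by auto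
    qed
    have step: "D (k + 1) = D k" if "1 \<le> k" "k + 1 \<le> N" for k
      using Pr_diff[OF that, of ?X] two[of "k+1"] that unfolding D_def by simp
    have const: "\<forall>k. 1 \<le> k \<longrightarrow> k \<le> N \<longrightarrow> D k = D 1"
    proof
      fix k show "1 \<le> k \<longrightarrow> k \<le> N \<longrightarrow> D k = D 1"
      proof (induction k)
        case 0 then show ?case by simp
      next
        case (Suc k)
        then show ?case using step[of k] by (cases "k = 0") auto
      qed
    qed
    have two1: "2 * ?X 1 = T 1 + T N"
    proof -
      have "T 1 = 1 \<or> T 1 = -1" "T N = 1 \<or> T N = -1" using T1 N by auto
      then show ?thesis by auto
    qed
    have "D 1 + D N = 0" using Pr_ends[OF N, of ?X] two1 unfolding D_def by simp
    moreover have "D N = D 1" using const[rule_format, of N] N by blast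
    ultimately have "D 1 = 0" by simp
    show "T = Pr N ?X"
    proof
      fix k
      show "T k = Pr N ?X k"
      proof (cases "k \<in> {1..N}")
        case True
        then have "D k = 0" using const[rule_format, of k] \<open>D 1 = 0\<close> by auto
        then show ?thesis unfolding D_def by simp
      next
        case False
        then show ?thesis using T0 Pr_out by simp
      qed
    qed
  qed
  show ?thesis
    unfolding xvec_def eqPr
  proof (rule the_equality)
    show "(\<forall>k. ?X k \<in> {-1, 0, 1}) \<and> (\<forall>k. k \<notin> {1..N} \<longrightarrow> ?X k = 0) \<and> T = Pr N ?X"
      by (rule exist)
    fix x assume "(\<forall>k. x k \<in> {-1, 0, 1}) \<and> (\<forall>k. k \<notin> {1..N} \<longrightarrow> x k = 0) \<and> T = Pr N x"
    then show "x = ?X" using uniq by blast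
  qed
qed




lemma vm_U: "vecmat N v (Ubar N) = (\<lambda>j. if j \<in> {1..N} then v (N + 1 - j) else 0)"
proof
  fix j
  show "vecmat N v (Ubar N) j = (if j \<in> {1..N} then v (N + 1 - j) else 0)"
  proof (cases "j \<in> {1..N}")
    case True
    have "(\<Sum>i=1..N. v i * Ubar N i j) = (\<Sum>i=1..N. if i = N + 1 - j then v i else 0)"
      by (rule sum.cong) (use True in \<open>auto simp: Ubar_def\<close>)
    also have "\<dots> = v (N + 1 - j)"
    proof -
      have "N + 1 - j \<in> {1..N}" using True by auto
      then show ?thesis by (simp add: sum.delta)
    qed
    finally show ?thesis using True unfolding vecmat_def by simp
  next
    case False
    then show ?thesis unfolding vecmat_def by (simp only: if_not_P if_False)
  qed
qed

lemma vm_T: "vecmat N w (Tbar N) = (\<lambda>j. if j \<in> {1..N} then (if 2 \<le> j then w (j - 1) else 0) else 0)"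
proof
  fix j
  show "vecmat N w (Tbar N) j = (if j \<in> {1..N} then (if 2 \<le> j then w (j - 1) else 0) else 0)"
  proof (cases "j \<in> {1..N}")
    case True
    have "(\<Sum>i=1..N. w i * Tbar N i j) = (\<Sum>i=1..N. if 2 \<le> j \<and> i = j - 1 then w i else 0)"
      by (rule sum.cong) (use True in \<open>auto simp: Tbar_def\<close>)
    also have "\<dots> = (if 2 \<le> j then w (j - 1) else 0)"
    proof (cases "2 \<le> j")
      case True2: True
      have "j - 1 \<in> {1..N}" using True True2 by auto
      then show ?thesis using True2 by (simp add: sum.delta)
    qed simp
    finally show ?thesis using True unfolding vecmat_def by simp
  next
    case False
    then show ?thesis unfolding vecmat_def by (simp only: if_not_P if_False)
  qed
qed

lemma sum_sigma:
  assumes "inj_on f K" "finite K"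
  shows "(\<Sum>k\<in>K. sigma (f k)) m = (if m \<in> f ` K then 1 else 0)"
proof -
  have "(\<Sum>k\<in>K. sigma (f k)) m = (\<Sum>k\<in>K. if f k = m then 1 else 0)"
    unfolding sum_fun_apply sigma_def by (rule sum.cong) auto
  also have "\<dots> = (if m \<in> f ` K then 1 else 0)"
  proof (cases "m \<in> f ` K")
    case True
    then obtain k0 where k0: "k0 \<in> K" "m = f k0" by auto
    have "(\<Sum>k\<in>K. if f k = m then 1 else 0) = (\<Sum>k\<in>K. if k = k0 then 1 else (0::int))"
      by (rule sum.cong) (use k0 assms(1) in \<open>auto simp: inj_on_def\<close>)
    then show ?thesis using k0 assms(2) True by (simp add: sum.delta')
  next
    case False
    then show ?thesis by (auto intro!: sum.neutral)
  qed
  finally show ?thesis .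
qed




theorem theorem6p3:
  fixes t :: nat and \<A> :: "nat set set"
  assumes "t \<ge> 3"
    and "nontrivial_clutter t \<A>"
  defines "\<B> \<equiv> blocker t \<A>"
  defines "N \<equiv> (2::nat) ^ t"
  shows "tope t (upcl t \<B>) = - vecmat N (tope t (upcl t \<A>)) (Ubar N)
    \<and> qnum N (tope t (upcl t \<B>)) = qnum N (tope t (upcl t \<A>))
    \<and> xvec N (tope t (upcl t \<B>)) = vecmat N (vecmat N (xvec N (tope t (upcl t \<A>))) (Ubar N)) (Tbar N)
    \<and> (\<forall>(\<rho>::nat) (i::nat \<Rightarrow> nat) (j::nat \<Rightarrow> nat).
          {k \<in> {1..N}. tope t (upcl t \<A>) k = -1} = (\<Union>k\<in>{1..\<rho>}. {i k..j k})
          \<and> (\<forall>k\<in>{1..\<rho>}. i k \<le> j k)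
          \<and> (\<forall>k\<in>{1..\<rho> - 1}. j k + 2 \<le> i (k + 1))
        \<longrightarrow> qnum N (tope t (upcl t \<B>)) = 2 * \<rho> - 1
          \<and> qnum N (tope t (upcl t \<A>)) = 2 * \<rho> - 1
          \<and> xvec N (tope t (upcl t \<A>)) = (\<Sum>k=1..\<rho> - 1. sigma (j k + 1)) - (\<Sum>l=1..\<rho>. sigma (i l))
          \<and> xvec N (tope t (upcl t \<B>)) = (\<Sum>k=1..\<rho> - 1. sigma (N - j k + 1)) - (\<Sum>l=1..\<rho>. sigma (N - i l + 2)))"
proof -
  define a where "a = tope t (upcl t \<A>)"
  define b where "b = tope t (upcl t \<B>)"
  define xa where "xa = xvec N a"
  define xb where "xb = xvec N b"
  have N1: "1 \<le> N" unfolding N_def by simp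
  have N2: "2 \<le> N"
  proof -
    have "(2::nat) ^ 1 \<le> 2 ^ t" by (rule power_increasing) (use assms(1) in auto)
    then show ?thesis unfolding N_def by simp
  qed
  have cl: "\<And>A. A \<in> \<A> \<Longrightarrow> A \<subseteq> {1..t}" using assms(2) unfolding nontrivial_clutter_def clutter_def by blast
  have neA: "\<A> \<noteq> {}" using assms(2) unfolding nontrivial_clutter_def by blast
  have emA: "{} \<notin> \<A>"
  proof
    assume e: "{} \<in> \<A>"
    have "\<And>A. A \<in> \<A> \<Longrightarrow> A = {}"
      using e assms(2) unfolding nontrivial_clutter_def clutter_def by blast
    then have "\<A> = {{}}" using e by blast
    then show False using assms(2) unfolding nontrivial_clutter_def by blast
  qed
  have a_out: "\<And>k. k \<notin> {1..N} \<Longrightarrow> a k = 0" unfolding a_def tope_def N_def by simp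
  have b_out: "\<And>k. k \<notin> {1..N} \<Longrightarrow> b k = 0" unfolding b_def tope_def N_def by simp
  have a_pm: "\<forall>k\<in>{1..N}. a k = 1 \<or> a k = -1" unfolding a_def tope_def N_def by simp
  have b_pm: "\<forall>k\<in>{1..N}. b k = 1 \<or> b k = -1" unfolding b_def tope_def N_def by simp
  have a1: "a 1 = 1"
  proof -
    have "{} \<notin> upcl t \<A>" using emA unfolding upcl_def by auto
    then show ?thesis unfolding a_def tope_def nth_subset_1 by simp
  qed
  have aN: "a N = -1"
  proof -
    obtain A0 where "A0 \<in> \<A>" using neA by blast
    then have "{1..t} \<in> upcl t \<A>" using cl unfolding upcl_def by blast
    then show ?thesis unfolding a_def tope_def N_def nth_subset_N by simp
  qed
  have ba: "b k = - a (N + 1 - k)" if k: "k \<in> {1..N}" for k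
  proof -
    define S where "S = nth_subset t k"
    have S: "S \<subseteq> {1..t}" using nth_subset_props[of k t] k unfolding S_def N_def by blast
    have c: "nth_subset t (N + 1 - k) = {1..t} - S"
      using nth_subset_compl[of k t] k unfolding S_def N_def by simp
    have k2: "N + 1 - k \<in> {1..N}" using k by auto
    have "S \<in> upcl t \<B> \<longleftrightarrow> meets_all \<A> S" unfolding \<B>_def by (rule upcl_blocker[OF S])
    moreover have "{1..t} - S \<in> upcl t \<A> \<longleftrightarrow> \<not> meets_all \<A> S"
    proof -
      have eqv: "\<And>C. C \<in> \<A> \<Longrightarrow> (C \<subseteq> {1..t} - S) = (S \<inter> C = {})" using cl by blast
      show ?thesis unfolding upcl_def meets_all_def using eqv by auto
    qed
    moreover have "b k = (if S \<in> upcl t \<B> then -1 else 1)"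
    proof -
      have kk: "k \<in> {1..2^t}" using k N_def by simp
      then show ?thesis unfolding b_def tope_def S_def by simp
    qed
    moreover have "a (N + 1 - k) = (if {1..t} - S \<in> upcl t \<A> then -1 else 1)"
    proof -
      have kk: "N + 1 - k \<in> {1..2^t}" using k2 N_def by simp
      then show ?thesis unfolding a_def tope_def c[symmetric] N_def by simp
    qed
    ultimately show ?thesis by simp
  qed
  have part1: "b = - vecmat N a (Ubar N)"
  proof
    fix k
    show "b k = (- vecmat N a (Ubar N)) k"
      using ba[of k] b_out[of k] unfolding vm_U by auto
  qed
  have xa_eq: "xa = (\<lambda>k. if k = 1 then (a 1 + a N) div 2
                        else if 2 \<le> k \<and> k \<le> N then (a k - a (k - 1)) div 2 else 0)"
    unfolding xa_def by (rule xvec_char[OF N1 a_pm]) (use a_out in blast)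
  have xb_eq: "xb = (\<lambda>k. if k = 1 then (b 1 + b N) div 2
                        else if 2 \<le> k \<and> k \<le> N then (b k - b (k - 1)) div 2 else 0)"
    unfolding xb_def by (rule xvec_char[OF N1 b_pm]) (use b_out in blast)
  have xa1: "xa 1 = 0" using a1 aN xa_eq by simp
  have xa_rel: "xb = (\<lambda>m. if 2 \<le> m \<and> m \<le> N then xa (N + 2 - m) else 0)"
  proof
    fix m
    show "xb m = (if 2 \<le> m \<and> m \<le> N then xa (N + 2 - m) else 0)"
    proof (cases "2 \<le> m \<and> m \<le> N")
      case True
      have "b m = - a (N + 1 - m)" using ba True by simp
      moreover have "b (m - 1) = - a (N + 2 - m)"
      proof -
        have "m - 1 \<in> {1..N}" "N + 1 - (m - 1) = N + 2 - m" using True by auto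
        then show ?thesis using ba[of "m - 1"] by simp
      qed
      moreover have "xa (N + 2 - m) = (a (N + 2 - m) - a (N + 2 - m - 1)) div 2"
      proof -
        have "N + 2 - m \<noteq> 1" "2 \<le> N + 2 - m" "N + 2 - m \<le> N" using True by auto
        then show ?thesis unfolding xa_eq by simp
      qed
      moreover have "N + 2 - m - 1 = N + 1 - m" using True by simp
      ultimately show ?thesis using xb_eq True by simp
    next
      case False
      show ?thesis
      proof (cases "m = 1")
        case True
        have "b 1 = - a N" "b N = - a 1" using ba[of 1] ba[of N] N1 by auto
        then show ?thesis using xb_eq True a1 aN by simp
      next
        case False
        then show ?thesis unfolding xb_eq using \<open>\<not> (2 \<le> m \<and> m \<le> N)\<close> by auto
      qed
    qed
  qed
  have part3: "xb = vecmat N (vecmat N xa (Ubar N)) (Tbar N)"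
  proof
    fix m
    show "xb m = vecmat N (vecmat N xa (Ubar N)) (Tbar N) m"
    proof (cases "2 \<le> m \<and> m \<le> N")
      case True
      then have "m - 1 \<in> {1..N}" "N + 1 - (m - 1) = N + 2 - m" by auto
      then show ?thesis unfolding vm_T vm_U xa_rel using True by simp
    next
      case False
      then show ?thesis unfolding vm_T vm_U xa_rel by auto
    qed
  qed
  have part2: "qnum N b = qnum N a"
  proof -
    have "{m \<in> {1..N}. xb m \<noteq> 0} = (\<lambda>m. N + 2 - m) ` {m \<in> {1..N}. xa m \<noteq> 0}"
    proof (intro set_eqI iffI)
      fix m assume "m \<in> {m \<in> {1..N}. xb m \<noteq> 0}"
      then have m: "2 \<le> m" "m \<le> N" "xa (N + 2 - m) \<noteq> 0" unfolding xa_rel by (auto split: if_splits)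
      then show "m \<in> (\<lambda>m. N + 2 - m) ` {m \<in> {1..N}. xa m \<noteq> 0}"
        by (intro image_eqI[of _ _ "N + 2 - m"]) auto
    next
      fix m assume "m \<in> (\<lambda>m. N + 2 - m) ` {m \<in> {1..N}. xa m \<noteq> 0}"
      then obtain m' where m': "m' \<in> {1..N}" "xa m' \<noteq> 0" "m = N + 2 - m'" by auto
      then have "m' \<noteq> 1" using xa1 by auto
      then have "2 \<le> m" "m \<le> N" "N + 2 - m = m'" using m' by auto
      then show "m \<in> {m \<in> {1..N}. xb m \<noteq> 0}" unfolding xa_rel using m' by auto
    qed
    moreover have "inj_on (\<lambda>m. N + 2 - m) {m \<in> {1..N}. xa m \<noteq> 0}"
      by (rule inj_onI) auto
    ultimately show ?thesis unfolding qnum_def xa_def[symmetric] xb_def[symmetric]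
      by (simp add: card_image)
  qed
  have part4: "\<forall>(\<rho>::nat) (i::nat \<Rightarrow> nat) (j::nat \<Rightarrow> nat).
          {k \<in> {1..N}. a k = -1} = (\<Union>k\<in>{1..\<rho>}. {i k..j k})
          \<and> (\<forall>k\<in>{1..\<rho>}. i k \<le> j k)
          \<and> (\<forall>k\<in>{1..\<rho> - 1}. j k + 2 \<le> i (k + 1))
        \<longrightarrow> qnum N b = 2 * \<rho> - 1
          \<and> qnum N a = 2 * \<rho> - 1
          \<and> xa = (\<Sum>k=1..\<rho> - 1. sigma (j k + 1)) - (\<Sum>l=1..\<rho>. sigma (i l))
          \<and> xb = (\<Sum>k=1..\<rho> - 1. sigma (N - j k + 1)) - (\<Sum>l=1..\<rho>. sigma (N - i l + 2))"
  proof (intro allI impI)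
    fix \<rho> :: nat and i j :: "nat \<Rightarrow> nat"
    assume H: "{k \<in> {1..N}. a k = -1} = (\<Union>k\<in>{1..\<rho>}. {i k..j k})
          \<and> (\<forall>k\<in>{1..\<rho>}. i k \<le> j k)
          \<and> (\<forall>k\<in>{1..\<rho> - 1}. j k + 2 \<le> i (k + 1))"
    define Dset where "Dset = {k \<in> {1..N}. a k = -1}"
    have H1: "Dset = (\<Union>k\<in>{1..\<rho>}. {i k..j k})" using H unfolding Dset_def by blast
    have HD: "m \<in> Dset \<longleftrightarrow> (\<exists>k. 1 \<le> k \<and> k \<le> \<rho> \<and> i k \<le> m \<and> m \<le> j k)" for m
      unfolding H1 by auto
    have ij: "\<And>k. 1 \<le> k \<Longrightarrow> k \<le> \<rho> \<Longrightarrow> i k \<le> j k" using H by auto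
    have gap: "\<And>k. 1 \<le> k \<Longrightarrow> k + 1 \<le> \<rho> \<Longrightarrow> j k + 2 \<le> i (k + 1)" using H by auto
    have Dsub: "\<And>m. m \<in> Dset \<Longrightarrow> 1 \<le> m \<and> m \<le> N" unfolding Dset_def by auto
    have Da1: "\<And>m. m \<in> Dset \<Longrightarrow> a m = -1" unfolding Dset_def by auto
    have Da2: "\<And>m. 1 \<le> m \<Longrightarrow> m \<le> N \<Longrightarrow> m \<notin> Dset \<Longrightarrow> a m = 1"
      unfolding Dset_def using a_pm by auto
    have D1: "1 \<notin> Dset" using a1 Da1 by fastforce
    have DN: "N \<in> Dset" unfolding Dset_def using aN N1 by simp
    have L0: "\<forall>k. 1 \<le> k \<longrightarrow> k < l \<longrightarrow> l \<le> \<rho> \<longrightarrow> j k + 2 \<le> i l" for l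
    proof (induction l)
      case 0 show ?case by simp
    next
      case (Suc l)
      show ?case
      proof (intro allI impI)
        fix k assume k: "1 \<le> k" "k < Suc l" "Suc l \<le> \<rho>"
        show "j k + 2 \<le> i (Suc l)"
        proof (cases "k = l")
          case True then show ?thesis using gap[of l] k by simp
        next
          case False
          then have "j k + 2 \<le> i l" using Suc.IH k by auto
          moreover have "i l \<le> j l" using ij[of l] k False by auto
          moreover have "j l + 2 \<le> i (Suc l)" using gap[of l] k False by auto
          ultimately show ?thesis by simp
        qed
      qed
    qed
    have L: "\<And>k l. 1 \<le> k \<Longrightarrow> k < l \<Longrightarrow> l \<le> \<rho> \<Longrightarrow> j k + 2 \<le> i l" using L0 by blast
    have imem: "\<And>l. 1 \<le> l \<Longrightarrow> l \<le> \<rho> \<Longrightarrow> i l \<in> Dset" using HD ij by blast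
    have jmem: "\<And>l. 1 \<le> l \<Longrightarrow> l \<le> \<rho> \<Longrightarrow> j l \<in> Dset" using HD ij by blast
    have i2: "\<And>l. 1 \<le> l \<Longrightarrow> l \<le> \<rho> \<Longrightarrow> 2 \<le> i l \<and> i l \<le> N"
    proof -
      fix l assume "1 \<le> l" "l \<le> \<rho>"
      then have "i l \<in> Dset" by (rule imem)
      then have "i l \<noteq> 1" "1 \<le> i l \<and> i l \<le> N" using D1 Dsub by auto
      then show "2 \<le> i l \<and> i l \<le> N" by linarith
    qed
    obtain l0 where l0: "1 \<le> l0" "l0 \<le> \<rho>" "i l0 \<le> N" "N \<le> j l0" using DN HD by blast
    have rho1: "1 \<le> \<rho>" using l0 by simp
    have jrho: "j \<rho> = N"
    proof (cases "l0 < \<rho>")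
      case True
      have "j l0 + 2 \<le> i \<rho>" using L[OF l0(1) True] by simp
      moreover have "i \<rho> \<le> j \<rho>" using ij rho1 by simp
      moreover have "j \<rho> \<le> N" using jmem[of \<rho>] rho1 Dsub by blast
      ultimately show ?thesis using l0 by simp
    next
      case False
      then have "l0 = \<rho>" using l0 by simp
      then show ?thesis using l0 jmem[of \<rho>] rho1 Dsub by force
    qed
    have jlt: "\<And>k. 1 \<le> k \<Longrightarrow> k \<le> \<rho> - 1 \<Longrightarrow> j k + 1 < N \<and> 2 \<le> j k"
    proof -
      fix k assume k: "1 \<le> k" "k \<le> \<rho> - 1"
      have "j k + 2 \<le> i \<rho>" using L[of k \<rho>] k rho1 by simp
      moreover have "i \<rho> \<le> N" using i2[of \<rho>] rho1 by simp
      moreover have "2 \<le> i k" "i k \<le> j k" using i2[of k] ij[of k] k by auto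
      ultimately show "j k + 1 < N \<and> 2 \<le> j k" by simp
    qed
    define I1 where "I1 = (\<lambda>k. j k + 1) ` {1..\<rho> - 1}"
    define I2 where "I2 = i ` {1..\<rho>}"
    have inj_i: "inj_on i {1..\<rho>}"
    proof (rule inj_onI)
      fix k l assume kl: "k \<in> {1..\<rho>}" "l \<in> {1..\<rho>}" "i k = i l"
      show "k = l"
      proof (rule ccontr)
        assume "k \<noteq> l"
        then consider "k < l" | "l < k" by linarith
        then show False
        proof cases
          case 1 then show False using L[of k l] ij[of k] kl by auto
        next
          case 2 then show False using L[of l k] ij[of l] kl by auto
        qed
      qed
    qed
    have inj_j: "inj_on (\<lambda>k. j k + 1) {1..\<rho> - 1}"
    proof (rule inj_onI)
      fix k l assume kl: "k \<in> {1..\<rho> - 1}" "l \<in> {1..\<rho> - 1}" "j k + 1 = j l + 1"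
      show "k = l"
      proof (rule ccontr)
        assume "k \<noteq> l"
        then consider "k < l" | "l < k" by linarith
        then show False
        proof cases
          case 1
          have "1 \<le> k" "l \<le> \<rho>" "1 \<le> l" using kl by auto
          then show False using L[of k l] ij[of l] kl 1 by auto
        next
          case 2
          have "1 \<le> l" "k \<le> \<rho>" "1 \<le> k" using kl by auto
          then show False using L[of l k] ij[of k] kl 2 by auto
        qed
      qed
    qed
    have char2: "m \<in> I2 \<longleftrightarrow> (2 \<le> m \<and> m \<le> N \<and> m \<in> Dset \<and> m - 1 \<notin> Dset)" for m
    proof
      assume "m \<in> I2"
      then obtain l where l: "1 \<le> l" "l \<le> \<rho>" "m = i l" unfolding I2_def by auto
      have "m - 1 \<notin> Dset"
      proof
        assume "m - 1 \<in> Dset"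
        then obtain k where k: "1 \<le> k" "k \<le> \<rho>" "i k \<le> m - 1" "m - 1 \<le> j k" using HD by blast
        have il: "2 \<le> i l" "i l \<le> j l" using i2[OF l(1,2)] ij[OF l(1,2)] by auto
        consider "k = l" | "k < l" | "l < k" by linarith
        then show False
        proof cases
          case 1 then show False using k l il by simp
        next
          case 2 then show False using L[of k l] k l il by simp
        next
          case 3 then show False using L[of l k] k l il by simp
        qed
      qed
      then show "2 \<le> m \<and> m \<le> N \<and> m \<in> Dset \<and> m - 1 \<notin> Dset"
        using i2[OF l(1,2)] imem[OF l(1,2)] l(3) by simp
    next
      assume m: "2 \<le> m \<and> m \<le> N \<and> m \<in> Dset \<and> m - 1 \<notin> Dset"
      then obtain k where k: "1 \<le> k" "k \<le> \<rho>" "i k \<le> m" "m \<le> j k" using HD by blast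
      have "i k = m"
      proof (rule ccontr)
        assume "i k \<noteq> m"
        then have "i k \<le> m - 1" "m - 1 \<le> j k" using k by auto
        then have "m - 1 \<in> Dset" using HD k by blast
        then show False using m by simp
      qed
      then show "m \<in> I2" unfolding I2_def using k by auto
    qed
    have char1: "m \<in> I1 \<longleftrightarrow> (2 \<le> m \<and> m \<le> N \<and> m \<notin> Dset \<and> m - 1 \<in> Dset)" for m
    proof
      assume "m \<in> I1"
      then obtain k where k: "1 \<le> k" "k \<le> \<rho> - 1" "m = j k + 1" unfolding I1_def by auto
      have k2: "k \<le> \<rho>" "k < \<rho>" using k by auto
      have "m \<notin> Dset"
      proof
        assume "m \<in> Dset"
        then obtain l where l: "1 \<le> l" "l \<le> \<rho>" "i l \<le> m" "m \<le> j l" using HD by blast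
        have ik: "i k \<le> j k" using ij k k2 by simp
        consider "k = l" | "k < l" | "l < k" by linarith
        then show False
        proof cases
          case 1 then show False using k l by simp
        next
          case 2 then show False using L[of k l] k l by simp
        next
          case 3 then show False using L[of l k] k l k2 ik by simp
        qed
      qed
      moreover have "m - 1 \<in> Dset" using jmem[of k] k k2 by simp
      ultimately show "2 \<le> m \<and> m \<le> N \<and> m \<notin> Dset \<and> m - 1 \<in> Dset"
        using jlt[OF k(1,2)] k(3) by simp
    next
      assume m: "2 \<le> m \<and> m \<le> N \<and> m \<notin> Dset \<and> m - 1 \<in> Dset"
      then obtain k where k: "1 \<le> k" "k \<le> \<rho>" "i k \<le> m - 1" "m - 1 \<le> j k" using HD by blast
      have jk: "j k = m - 1"
      proof (rule ccontr)
        assume "j k \<noteq> m - 1"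
        then have "i k \<le> m" "m \<le> j k" using k by auto
        then have "m \<in> Dset" using HD k by blast
        then show False using m by simp
      qed
      have "k \<noteq> \<rho>" using jk jrho m by auto
      then have "k \<in> {1..\<rho> - 1}" using k by auto
      moreover have "m = j k + 1" using jk m by simp
      ultimately show "m \<in> I1" unfolding I1_def by blast
    qed
    have xa_pt: "xa m = (if m \<in> I1 then 1 else 0) - (if m \<in> I2 then 1 else 0)" for m
    proof (cases "2 \<le> m \<and> m \<le> N")
      case True
      then have xm: "xa m = (a m - a (m - 1)) div 2" unfolding xa_eq by simp
      have r1: "1 \<le> m - 1" "m - 1 \<le> N" using True by auto
      have rng: "2 \<le> m \<and> m \<le> N" using True by simp
      show ?thesis
      proof (cases "m \<in> Dset")
        case mD: True
        show ?thesis
        proof (cases "m - 1 \<in> Dset")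
          case True
          have "m \<notin> I1" "m \<notin> I2" using char1[of m] char2[of m] mD True by blast+
          then show ?thesis using xm Da1[OF mD] Da1[OF True] by simp
        next
          case False
          have "m \<notin> I1" "m \<in> I2" using char1[of m] char2[of m] mD False rng by blast+
          then show ?thesis using xm Da1[OF mD] Da2[OF r1 False] by simp
        qed
      next
        case mD: False
        have r0: "1 \<le> m" "m \<le> N" using True by auto
        show ?thesis
        proof (cases "m - 1 \<in> Dset")
          case True
          have "m \<in> I1" "m \<notin> I2" using char1[of m] char2[of m] mD True rng by blast+
          then show ?thesis using xm Da2[OF r0 mD] Da1[OF True] by simp
        next
          case False
          have "m \<notin> I1" "m \<notin> I2" using char1[of m] char2[of m] mD False by blast+
          then show ?thesis using xm Da2[OF r0 mD] Da2[OF r1 False] by simp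
        qed
      qed
    next
      case False
      then have "m \<notin> I1" "m \<notin> I2" using char1 char2 by auto
      moreover have "xa m = 0"
      proof (cases "m = 1")
        case True then show ?thesis using xa1 by simp
      next
        case False
        then show ?thesis unfolding xa_eq using \<open>\<not> (2 \<le> m \<and> m \<le> N)\<close> by auto
      qed
      ultimately show ?thesis by simp
    qed
    have xa_sig: "xa = (\<Sum>k=1..\<rho> - 1. sigma (j k + 1)) - (\<Sum>l=1..\<rho>. sigma (i l))"
    proof
      fix m
      show "xa m = ((\<Sum>k=1..\<rho> - 1. sigma (j k + 1)) - (\<Sum>l=1..\<rho>. sigma (i l))) m"
        unfolding minus_apply sum_sigma[OF inj_j finite_atLeastAtMost] sum_sigma[OF inj_i finite_atLeastAtMost]
          xa_pt I1_def[symmetric] I2_def[symmetric] by simp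
    qed
    have qa: "qnum N a = 2 * \<rho> - 1"
    proof -
      have "{m \<in> {1..N}. xa m \<noteq> 0} = I1 \<union> I2"
      proof (intro set_eqI iffI)
        fix m assume "m \<in> {m \<in> {1..N}. xa m \<noteq> 0}"
        then have "xa m \<noteq> 0" by simp
        then show "m \<in> I1 \<union> I2" using xa_pt[of m] by (cases "m \<in> I1"; cases "m \<in> I2") simp_all
      next
        fix m assume m: "m \<in> I1 \<union> I2"
        have "\<not> (m \<in> I1 \<and> m \<in> I2)" using char1[of m] char2[of m] by blast
        then have "xa m \<noteq> 0" using m xa_pt[of m] by (cases "m \<in> I1"; cases "m \<in> I2") simp_all
        moreover have "2 \<le> m \<and> m \<le> N" using m char1[of m] char2[of m] by blast
        ultimately show "m \<in> {m \<in> {1..N}. xa m \<noteq> 0}" by simp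
      qed
      moreover have "I1 \<inter> I2 = {}"
      proof -
        have "m \<notin> I1 \<inter> I2" for m using char1[of m] char2[of m] by blast
        then show ?thesis by blast
      qed
      moreover have "card I1 = \<rho> - 1" unfolding I1_def using card_image[OF inj_j] by simp
      moreover have "card I2 = \<rho>" unfolding I2_def using card_image[OF inj_i] by simp
      moreover have "finite I1" "finite I2" unfolding I1_def I2_def by auto
      ultimately have "card {m \<in> {1..N}. xa m \<noteq> 0} = (\<rho> - 1) + \<rho>" by (simp add: card_Un_disjoint)
      then show ?thesis unfolding qnum_def xa_def[symmetric] using rho1 by simp
    qed
    have inj_j': "inj_on (\<lambda>k. N - j k + 1) {1..\<rho> - 1}"
    proof (rule inj_onI)
      fix k l assume kl: "k \<in> {1..\<rho> - 1}" "l \<in> {1..\<rho> - 1}" "N - j k + 1 = N - j l + 1"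
      then have "j k + 1 = j l + 1" using jlt[of k] jlt[of l] by auto
      then show "k = l" using inj_j kl unfolding inj_on_def by blast
    qed
    have inj_i': "inj_on (\<lambda>l. N - i l + 2) {1..\<rho>}"
    proof (rule inj_onI)
      fix k l assume kl: "k \<in> {1..\<rho>}" "l \<in> {1..\<rho>}" "N - i k + 2 = N - i l + 2"
      then have "i k = i l" using i2[of k] i2[of l] by auto
      then show "k = l" using inj_i kl unfolding inj_on_def by blast
    qed
    have img1: "m \<in> (\<lambda>k. N - j k + 1) ` {1..\<rho> - 1} \<longleftrightarrow> (2 \<le> m \<and> m \<le> N \<and> N + 2 - m \<in> I1)" for m
    proof
      assume "m \<in> (\<lambda>k. N - j k + 1) ` {1..\<rho> - 1}"
      then obtain k where k: "k \<in> {1..\<rho> - 1}" "m = N - j k + 1" by auto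
      then have "j k + 1 < N" "2 \<le> j k" using jlt[of k] by auto
      then have "2 \<le> m" "m \<le> N" "N + 2 - m = j k + 1" using k by auto
      then show "2 \<le> m \<and> m \<le> N \<and> N + 2 - m \<in> I1" unfolding I1_def using k by auto
    next
      assume m: "2 \<le> m \<and> m \<le> N \<and> N + 2 - m \<in> I1"
      then obtain k where k: "k \<in> {1..\<rho> - 1}" "N + 2 - m = j k + 1" unfolding I1_def by auto
      then have "m = N - j k + 1" using m by auto
      then show "m \<in> (\<lambda>k. N - j k + 1) ` {1..\<rho> - 1}" using k by blast
    qed
    have img2: "m \<in> (\<lambda>l. N - i l + 2) ` {1..\<rho>} \<longleftrightarrow> (2 \<le> m \<and> m \<le> N \<and> N + 2 - m \<in> I2)" for m
    proof
      assume "m \<in> (\<lambda>l. N - i l + 2) ` {1..\<rho>}"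
      then obtain l where l: "l \<in> {1..\<rho>}" "m = N - i l + 2" by auto
      then have "2 \<le> i l" "i l \<le> N" using i2[of l] by auto
      then have "2 \<le> m" "m \<le> N" "N + 2 - m = i l" using l by auto
      then show "2 \<le> m \<and> m \<le> N \<and> N + 2 - m \<in> I2" unfolding I2_def using l by auto
    next
      assume m: "2 \<le> m \<and> m \<le> N \<and> N + 2 - m \<in> I2"
      then obtain l where l: "l \<in> {1..\<rho>}" "N + 2 - m = i l" unfolding I2_def by auto
      then have "m = N - i l + 2" using m by auto
      then show "m \<in> (\<lambda>l. N - i l + 2) ` {1..\<rho>}" using l by blast
    qed
    have xb_sig: "xb = (\<Sum>k=1..\<rho> - 1. sigma (N - j k + 1)) - (\<Sum>l=1..\<rho>. sigma (N - i l + 2))"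
    proof
      fix m
      show "xb m = ((\<Sum>k=1..\<rho> - 1. sigma (N - j k + 1)) - (\<Sum>l=1..\<rho>. sigma (N - i l + 2))) m"
        unfolding minus_apply sum_sigma[OF inj_j' finite_atLeastAtMost] sum_sigma[OF inj_i' finite_atLeastAtMost]
          img1 img2 xa_rel xa_pt by simp
    qed
    show "qnum N b = 2 * \<rho> - 1 \<and> qnum N a = 2 * \<rho> - 1
          \<and> xa = (\<Sum>k=1..\<rho> - 1. sigma (j k + 1)) - (\<Sum>l=1..\<rho>. sigma (i l))
          \<and> xb = (\<Sum>k=1..\<rho> - 1. sigma (N - j k + 1)) - (\<Sum>l=1..\<rho>. sigma (N - i l + 2))"
      using qa part2 xa_sig xb_sig by simp
  qed
  show ?thesis
    unfolding a_def[symmetric] b_def[symmetric] xa_def[symmetric] xb_def[symmetric]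
    using part1 part2 part3 part4 by (intro conjI) assumption+
qed


end
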